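(* The sequence $(f_n)_{n\ge 1}$ is strictly decreasing, i.e. $f_{n+1}<f_n$ for every integer $n\ge 1$.
   Context: Let $e(x)=(1+x)^{1/x}$ for $x>-1$, $x\neq 0$, and $e(0)=\mathrm{e}$ (the base of the natural logarithm). For $x\in(-1,1)$ one has the Maclaurin expansion $e(x)=\mathrm{e}\bigl(1+\sum_{k=1}^\infty e_k x^k\bigr)$ with $e_0=1$ (so $e_1=-\tfrac12$, $e_2=\tfrac{11}{24}$, $e_3=-\tfrac7{16},\dots$). Equivalently, for $k\ge1$, $e_k=\mathrm{e}^{-1}\sum_{i=1}^\infty \frac{S_1(k+i,i)}{(k+i)!}$, where $S_1(p,q)$ are the (signed) Stirling numbers of the first kind, defined by $S_1(p,p)=1$, $S_1(p,q)=0$ for $p<q$, and $S_1(p+1,q)=-pS_1(p,q)+S_1(p,q-1)$; the sign of $S_1(p,q)$ is $(-1)^{p-q}$. Define $f_k=(-1)^k e_k$ for $k\ge 0$. *)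

theory Defs
  imports "HOL-Analysis.Analysis"
begin

text \<open>The function e(x) = (1+x)^(1/x) for x > -1, x \<noteq> 0, with e(0) = e.
  (Outside (-1,\<infinity>) the value is irrelevant; we set it via the same formula.)\<close>
definition efun :: "real \<Rightarrow> real" where
  "efun x = (if x = 0 then exp 1 else (1 + x) powr (1 / x))"

text \<open>Maclaurin coefficients: e(x) = e (\<Sum> e_k x^k), so e_k = e^(k)(0) / (k! e).\<close>
definition ecoef :: "nat \<Rightarrow> real" where
  "ecoef k = (deriv ^^ k) efun 0 / (fact k * exp 1)"

definition fcoef :: "nat \<Rightarrow> real" where
  "fcoef k = (-1) ^ k * ecoef k"

end

theory Submission
  imports Defs
begin


definition QQ :: "real fps" where "QQ = fps_shift 1 (fps_ln 1) - 1"
definition EE :: "real fps" where "EE = fps_exp 1 oo QQ"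
definition RR :: "real fps" where "RR = Abs_fps (\<lambda>j. (-1)^j / (real j + 2))"
definition DD :: "real fps" where "DD = (1 + fps_X) * EE"

lemma QQ_nth: "fps_nth QQ (k) = (if k = 0 then 0 else (-1)^k / (real k + 1))"
  by (simp add: QQ_def fps_ln_nth)

lemma EE_0: "fps_nth EE (0) = 1"
  by (simp add: EE_def QQ_nth)

lemma EE_deriv: "fps_deriv EE = EE * fps_deriv QQ"
  unfolding EE_def by (subst fps_compose_deriv) (simp_all add: QQ_nth)

lemma RQ: "(1 + fps_X) * (RR - fps_deriv QQ) = 1"
proof -
  have "RR - fps_deriv QQ = Abs_fps (\<lambda>n. (-1)^n)"
  proof (rule fps_ext)
    fix n
    have h: "real n + 2 \<noteq> 0" by linarith
    show "fps_nth (RR - fps_deriv QQ) n = fps_nth (Abs_fps (\<lambda>n. (-1::real)^n)) n"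
    proof -
      have "fps_nth (RR - fps_deriv QQ) n = (-1)^n / (real n + 2) + (real n + 1) * (-1)^n / (real n + 2)"
        by (simp add: RR_def QQ_nth add_ac)
      also have "\<dots> = ((real n + 2) * (-1)^n) / (real n + 2)"
        by (simp add: add_divide_distrib[symmetric] algebra_simps)
      also have "\<dots> = (-1)^n" using h by (rule nonzero_mult_div_cancel_left)
      finally show ?thesis by simp
    qed
  qed
  also have "\<dots> = inverse (1 + fps_X)" by (simp add: fps_inverse_fps_X_plus1)
  finally show ?thesis by (simp add: inverse_mult_eq_1')
qed

lemma DD_deriv: "fps_deriv DD = RR * DD"
proof -
  have "fps_deriv DD = EE + (1 + fps_X) * (EE * fps_deriv QQ)"
    by (simp add: DD_def EE_deriv)
  also have "\<dots> = EE * ((1 + fps_X) * (RR - fps_deriv QQ)) + (1 + fps_X) * (EE * fps_deriv QQ)"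
    by (simp add: RQ)
  also have "\<dots> = RR * DD" by (simp add: DD_def algebra_simps)
  finally show ?thesis .
qed

lemma DD_nth: "fps_nth DD (Suc n) = fps_nth EE (Suc n) + fps_nth EE (n)" "fps_nth DD (0) = 1"
  by (simp_all add: DD_def algebra_simps fps_X_mult_nth EE_0)

definition dd :: "nat \<Rightarrow> real" where "dd n = (-1)^n * fps_nth DD n"

lemma DD_dd: "fps_nth DD n = (-1)^n * dd n"
  by (simp add: dd_def)

lemma dd_0: "dd 0 = 1" by (simp add: dd_def DD_nth)

lemma dd_rec0: "real (Suc n) * dd (Suc n) = - (\<Sum>i=0..n. dd (n - i) / (real i + 2))"
proof -
  have "real (Suc n) * fps_nth DD (Suc n) = fps_nth (fps_deriv DD) n"
    by (simp add: fps_deriv_nth algebra_simps)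
  also have "\<dots> = (\<Sum>i=0..n. fps_nth RR i * fps_nth DD (n - i))"
    by (simp add: DD_deriv fps_mult_nth)
  also have "\<dots> = (\<Sum>i=0..n. (-1)^n * (dd (n - i) / (real i + 2)))"
  proof (rule sum.cong[OF refl])
    fix i assume "i \<in> {0..n}"
    hence "(-1::real)^i * (-1)^(n-i) = (-1)^n" by (simp add: power_add[symmetric])
    thus "fps_nth RR i * fps_nth DD (n - i) = (-1)^n * (dd (n - i) / (real i + 2))"
      by (simp add: RR_def DD_dd)
  qed
  also have "\<dots> = (-1)^n * (\<Sum>i=0..n. dd (n - i) / (real i + 2))"
    by (simp add: sum_distrib_left)
  finally have "real (Suc n) * ((-1)^(Suc n) * dd (Suc n)) = (-1)^n * (\<Sum>i=0..n. dd (n - i) / (real i + 2))"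
    by (simp add: DD_dd)
  hence "(-1)^n * (real (Suc n) * dd (Suc n)) = (-1)^n * (- (\<Sum>i=0..n. dd (n - i) / (real i + 2)))"
    by (simp add: algebra_simps)
  thus ?thesis by (metis (no_types) mult_left_cancel zero_neq_neg_one power_eq_0_iff)
qed

definition SS :: "nat \<Rightarrow> real" where "SS n = (\<Sum>k=0..n. dd k / (real (n - k) + 2))"

lemma dd_rec: "real (Suc n) * dd (Suc n) = - SS n"
proof -
  have "SS n = (\<Sum>i=0..n. dd (n - i) / (real i + 2))"
    unfolding SS_def by (subst sum.atLeastAtMost_rev) (auto intro!: sum.cong)
  thus ?thesis using dd_rec0 by simp
qed

lemma aux_ineq:
  fixes d a N :: real
  assumes "d < 0" "0 \<le> a" "a + 1 \<le> N"
  shows "(N+1)/(N+2) * (d/(a+2)) \<le> d/(a+3)"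
proof -
  have p: "a + 2 > 0" "a + 3 > 0" "N + 2 > 0" using assms by auto
  have i: "1/(a+3) \<le> (N+1)/((N+2)*(a+2))"
    using p assms by (simp add: divide_simps) (simp add: algebra_simps)
  have "d * ((N+1)/((N+2)*(a+2))) \<le> d * (1/(a+3))"
    using i assms by (intro mult_left_mono_neg) auto
  thus ?thesis by (simp add: mult.commute)
qed

lemma dd_neg: "\<forall>k. 1 \<le> k \<and> k \<le> Suc n \<longrightarrow> dd k < 0"
proof (induction n)
  case 0
  have "real (Suc 0) * dd (Suc 0) = - SS 0" by (rule dd_rec)
  hence "dd 1 = - 1/2" by (simp add: SS_def dd_0)
  then show ?case by (auto simp: le_Suc_eq)
next
  case (Suc m)
  define n where "n = Suc m"
  have neg: "dd k < 0" if "1 \<le> k" "k \<le> n" for k using Suc.IH that n_def by auto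
  define r :: real where "r = (real n + 1) / (real n + 2)"
  have Sn: "SS n = dd 0 / (real n + 2) + (\<Sum>k=1..m. dd k / (real (n - k) + 2)) + dd n / 2"
    unfolding SS_def n_def
    by (simp add: sum.atLeast_Suc_atMost[of 0] del: sum.cl_ivl_Suc) (simp add: sum.cl_ivl_Suc)
  have Sm: "SS m = dd 0 / (real m + 2) + (\<Sum>k=1..m. dd k / (real (m - k) + 2))"
    unfolding SS_def by (simp add: sum.atLeast_Suc_atMost[of 0])
  have mid: "r * (\<Sum>k=1..m. dd k / (real (m - k) + 2)) \<le> (\<Sum>k=1..m. dd k / (real (n - k) + 2))"
    unfolding sum_distrib_left
  proof (rule sum_mono)
    fix k assume k: "k \<in> {1..m}"
    have e1: "real (m - k) = real m - real k" "real (n - k) + 2 = (real m - real k) + 3"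
      using k by (auto simp: n_def of_nat_diff)
    show "r * (dd k / (real (m - k) + 2)) \<le> dd k / (real (n - k) + 2)"
      unfolding e1 r_def using k neg[of k]
      by (intro aux_ineq) (auto simp: n_def)
  qed
  have rec: "real n * dd n = - SS m" using dd_rec[of m] by (simp add: n_def)
  have "r / (real m + 2) = 1 / (real n + 2)"
  proof -
    have "real n + 1 = real m + 2" by (simp add: n_def)
    moreover have "real m + 2 > 0" by simp
    ultimately show ?thesis unfolding r_def
      by (simp add: field_simps) (smt (verit) of_nat_0_le_iff mult_nonneg_nonneg)
  qed
  have "SS n \<ge> dd 0 / (real n + 2) + r * (SS m - dd 0 / (real m + 2)) + dd n / 2"
    using Sn Sm mid by simp
  also have "dd 0 / (real n + 2) + r * (SS m - dd 0 / (real m + 2)) + dd n / 2 = r * SS m + dd n / 2"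
    using \<open>r / (real m + 2) = 1 / (real n + 2)\<close> by (simp add: algebra_simps dd_0)
  also have "\<dots> = dd n * (1/2 - r * real n)" using rec by (simp add: algebra_simps)
  finally have ge: "SS n \<ge> dd n * (1/2 - r * real n)" .
  have "r * real n > 1/2"
    unfolding r_def n_def by (simp add: field_simps) (smt (verit) of_nat_0_le_iff mult_nonneg_nonneg)
  hence "dd n * (1/2 - r * real n) > 0" using neg[of n] by (intro mult_neg_neg) (auto simp: n_def)
  with ge have "SS n > 0" by linarith
  moreover have "real (Suc n) * dd (Suc n) = - SS n" by (rule dd_rec)
  ultimately have "dd (Suc n) < 0"
    by (smt (verit) of_nat_0_le_iff mult_nonneg_nonneg)
  then show ?case using Suc.IH n_def by (auto simp: le_Suc_eq)
qed



lemma radius_ge1: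
  fixes F :: "real fps"
  assumes "\<And>n. \<bar>fps_nth F n\<bar> \<le> 1"
  shows "fps_conv_radius F \<ge> 1"
  unfolding fps_conv_radius_def
proof (rule conv_radius_geI_ex')
  fix r :: real assume r: "0 < r" "ereal r < 1"
  show "summable (\<lambda>n. fps_nth F n * of_real r ^ n)"
  proof (rule summable_comparison_test[of _ "\<lambda>n. r ^ n"])
    show "\<exists>N. \<forall>n\<ge>N. norm (fps_nth F n * of_real r ^ n) \<le> r ^ n"
    proof (intro exI[of _ 0] allI impI)
      fix n :: nat
      have "\<bar>fps_nth F n\<bar> * r ^ n \<le> 1 * r ^ n"
        using assms[of n] r by (intro mult_right_mono) auto
      thus "norm (fps_nth F n * of_real r ^ n) \<le> r ^ n" using r by (simp add: abs_mult)
    qed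
    show "summable (\<lambda>n. r ^ n)" using r by (intro summable_geometric) auto
  qed
qed

lemma QQ_bound: "\<bar>fps_nth QQ n\<bar> \<le> 1"
  by (simp add: QQ_nth abs_div)

lemma QQd_bound: "\<bar>fps_nth (fps_deriv QQ) n\<bar> \<le> 1"
  by (simp add: QQ_nth abs_div abs_mult fps_deriv_nth)

lemma EE_rec: "real (Suc n) * fps_nth EE (Suc n) = (\<Sum>i=0..n. fps_nth EE i * fps_nth (fps_deriv QQ) (n - i))"
proof -
  have "real (Suc n) * fps_nth EE (Suc n) = fps_nth (fps_deriv EE) n"
    by (simp add: fps_deriv_nth algebra_simps)
  also have "\<dots> = (\<Sum>i=0..n. fps_nth EE i * fps_nth (fps_deriv QQ) (n - i))"
    by (simp add: EE_deriv fps_mult_nth)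
  finally show ?thesis .
qed

lemma EE_bound: "\<bar>fps_nth EE n\<bar> \<le> 1"
proof (induction n rule: less_induct)
  case (less n)
  show ?case
  proof (cases n)
    case 0 thus ?thesis by (simp add: EE_0)
  next
    case (Suc m)
    have "real (Suc m) * \<bar>fps_nth EE (Suc m)\<bar> = \<bar>\<Sum>i=0..m. fps_nth EE i * fps_nth (fps_deriv QQ) (m - i)\<bar>"
      using EE_rec[of m] by (metis abs_mult abs_of_nat)
    also have "\<dots> \<le> (\<Sum>i=0..m. \<bar>fps_nth EE i * fps_nth (fps_deriv QQ) (m - i)\<bar>)"
      by (rule sum_abs)
    also have "\<dots> \<le> (\<Sum>i=0..m. 1)"
    proof (rule sum_mono)
      fix i assume "i \<in> {0..m}"
      hence "\<bar>fps_nth EE i\<bar> \<le> 1" using less Suc by auto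
      thus "\<bar>fps_nth EE i * fps_nth (fps_deriv QQ) (m - i)\<bar> \<le> 1"
        using QQd_bound[of "m-i"] by (simp add: abs_mult mult_le_one)
    qed
    also have "\<dots> = real (Suc m) * 1" by simp
    finally have "\<bar>fps_nth EE (Suc m)\<bar> \<le> 1"
      by (subst (asm) mult_le_cancel_left_pos) auto
    thus ?thesis using Suc by simp
  qed
qed

lemma rad_QQ: "fps_conv_radius QQ \<ge> 1" by (intro radius_ge1 QQ_bound)
lemma rad_EE: "fps_conv_radius EE \<ge> 1" by (intro radius_ge1 EE_bound)
lemma rad_QQd: "fps_conv_radius (fps_deriv QQ) \<ge> 1" by (intro radius_ge1 QQd_bound)

lemma lt_rad:
  assumes "fps_conv_radius F \<ge> 1" "\<bar>x::real\<bar> < 1"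
  shows "ereal (norm x) < fps_conv_radius F"
proof -
  have "ereal (norm x) < 1" using assms(2) by simp
  thus ?thesis using assms(1) by (rule less_le_trans)
qed

lemma eval_ln:
  assumes "\<bar>x::real\<bar> < 1"
  shows "eval_fps (fps_ln 1) x = ln (1 + x)"
proof -
  have "ln (1 + x) = (\<Sum>n. (-1)^n * (1 / real (n + 1)) * x^(Suc n))"
    using ln_series[of "1 + x"] assms by auto
  moreover have "summable (\<lambda>n. (-1::real)^n * (1 / real (n + 1)) * x^(Suc n))"
  proof -
    have "summable (\<lambda>n. fps_nth (fps_ln 1) n * x ^ n)"
      using assms by (intro summable_fps) (simp add: fps_conv_radius_ln)
    hence "summable (\<lambda>n. fps_nth (fps_ln 1) (Suc n) * x ^ (Suc n))"
      by (subst summable_Suc_iff)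
    thus ?thesis by (simp add: fps_ln_nth)
  qed
  ultimately have "(\<lambda>n. fps_nth (fps_ln 1) (Suc n) * x ^ (Suc n)) sums ln (1 + x)"
    by (simp add: fps_ln_nth summable_sums)
  hence "(\<lambda>n. fps_nth (fps_ln 1) n * x ^ n) sums ln (1 + x)"
    by (subst (asm) sums_Suc_iff) (simp add: fps_ln_nth)
  thus ?thesis unfolding eval_fps_def by (simp add: sums_iff)
qed

lemma eval_QQ:
  assumes "\<bar>x::real\<bar> < 1"
  shows "eval_fps QQ x = (if x = 0 then 0 else ln (1 + x) / x - 1)"
proof -
  have ln0: "fps_ln (1::real) \<noteq> 0"
  proof
    assume "fps_ln (1::real) = 0"
    hence "fps_nth (fps_ln (1::real)) 1 = 0" by simp
    thus False by (simp add: fps_ln_nth)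
  qed
  have sd: "1 \<le> subdegree (fps_ln (1::real))"
    by (intro subdegree_geI ln0) (simp add: fps_ln_nth)
  have r: "ereal (norm x) < fps_conv_radius (fps_ln (1::real))"
    using assms by (simp add: fps_conv_radius_ln)
  have "eval_fps QQ x = eval_fps (fps_shift 1 (fps_ln 1)) x - eval_fps 1 x"
    unfolding QQ_def using r by (intro eval_fps_diff) auto
  also have "eval_fps (fps_shift 1 (fps_ln 1)) x = (if x = 0 then fps_nth (fps_ln 1) 1 else eval_fps (fps_ln 1) x / x ^ 1)"
    using sd r by (intro eval_fps_shift) auto
  finally show ?thesis using eval_ln[OF assms] by (auto simp: fps_ln_nth)
qed



lemma EE_eval:
  assumes "\<bar>x::real\<bar> < 1"
  shows "eval_fps EE x = exp (eval_fps QQ x)"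
proof -
  define g where "g = (\<lambda>x. eval_fps EE x * exp (- eval_fps QQ x))"
  have D: "(g has_real_derivative 0) (at y)" if y: "y \<in> {-1<..<1}" for y
  proof -
    have y': "\<bar>y\<bar> < 1" using y by auto
    have dE: "(eval_fps EE has_real_derivative eval_fps (fps_deriv EE) y) (at y)"
      by (intro has_field_derivative_eval_fps lt_rad rad_EE y')
    have dQ: "(eval_fps QQ has_real_derivative eval_fps (fps_deriv QQ) y) (at y)"
      by (intro has_field_derivative_eval_fps lt_rad rad_QQ y')
    have m: "eval_fps (fps_deriv EE) y = eval_fps EE y * eval_fps (fps_deriv QQ) y"
      unfolding EE_deriv by (intro eval_fps_mult lt_rad rad_EE rad_QQd y')
    have dexp: "((\<lambda>x. exp (- eval_fps QQ x)) has_real_derivative exp (- eval_fps QQ y) * (- eval_fps (fps_deriv QQ) y)) (at y)"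
      using DERIV_chain2[OF DERIV_exp DERIV_minus[OF dQ]] by simp
    have "(g has_real_derivative eval_fps (fps_deriv EE) y * exp (- eval_fps QQ y) + exp (- eval_fps QQ y) * (- eval_fps (fps_deriv QQ) y) * eval_fps EE y) (at y)"
      unfolding g_def by (rule DERIV_mult[OF dE dexp])
    moreover have "eval_fps (fps_deriv EE) y * exp (- eval_fps QQ y) + exp (- eval_fps QQ y) * (- eval_fps (fps_deriv QQ) y) * eval_fps EE y = 0"
      using m by (simp add: algebra_simps)
    ultimately show ?thesis by simp
  qed
  have "g x = g 0"
    by (rule DERIV_isconst3[of "-1" 1]) (use assms D in auto)
  also have "g 0 = 1" by (simp add: g_def eval_fps_at_0 EE_0 QQ_nth)
  finally have "eval_fps EE x * exp (- eval_fps QQ x) = 1" by (simp add: g_def)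
  thus ?thesis by (simp add: exp_minus field_simps)
qed

lemma efun_eval:
  assumes "\<bar>x::real\<bar> < 1"
  shows "efun x = eval_fps (fps_const (exp 1) * EE) x"
proof -
  have "eval_fps (fps_const (exp 1) * EE) x = exp 1 * eval_fps EE x"
    using lt_rad[OF rad_EE assms] by (subst eval_fps_mult) auto
  also have "\<dots> = exp (1 + eval_fps QQ x)" by (simp add: EE_eval assms exp_add)
  also have "\<dots> = efun x"
  proof (cases "x = 0")
    case True thus ?thesis by (simp add: efun_def eval_QQ)
  next
    case False
    have "1 + x > 0" using assms by auto
    thus ?thesis using False assms by (simp add: efun_def eval_QQ powr_def field_simps)
  qed
  finally show ?thesis by simp
qed

lemma efun_expansion: "efun has_fps_expansion (fps_const (exp 1) * EE)"
  unfolding has_fps_expansion_def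
proof
  have "fps_conv_radius (fps_const (exp 1) * EE) \<ge> 1"
    using rad_EE by (simp add: fps_conv_radius_cmult_left)
  moreover have "(0::ereal) < 1" by simp
  ultimately show "0 < fps_conv_radius (fps_const (exp 1) * EE)"
    using less_le_trans by blast
  have "eventually (\<lambda>z. z \<in> ball (0::real) 1) (nhds 0)"
    by (intro eventually_nhds_in_open) auto
  thus "\<forall>\<^sub>F z in nhds 0. eval_fps (fps_const (exp 1) * EE) z = efun z"
  proof eventually_elim
    case (elim z)
    hence "\<bar>z\<bar> < 1" by simp
    thus ?case by (rule efun_eval[symmetric])
  qed
qed

theorem fps_nth_conv_deriv_real:
  fixes f :: "real fps"
  assumes "fps_conv_radius f > 0"
  shows   "fps_nth f n = (deriv ^^ n) (eval_fps f) 0 / fact n"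
  using assms
proof (induction n arbitrary: f)
  case 0
  thus ?case by (simp add: eval_fps_def)
next
  case (Suc n f)
  have "(deriv ^^ Suc n) (eval_fps f) 0 = (deriv ^^ n) (deriv (eval_fps f)) 0"
    unfolding funpow_Suc_right o_def ..
  also have "eventually (\<lambda>z::real. z \<in> eball 0 (fps_conv_radius f)) (nhds 0)"
    using Suc.prems by (intro eventually_nhds_in_open) (auto simp: zero_ereal_def)
  hence "eventually (\<lambda>z. deriv (eval_fps f) z = eval_fps (fps_deriv f) z) (nhds 0)"
    by eventually_elim (simp add: eval_fps_deriv)
  hence "(deriv ^^ n) (deriv (eval_fps f)) 0 = (deriv ^^ n) (eval_fps (fps_deriv f)) 0"
    by (intro higher_deriv_cong_ev refl)
  also have "\<dots> / fact n = fps_nth (fps_deriv f) n"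
    using Suc.prems fps_conv_radius_deriv[of f] 
    by (intro Suc.IH [symmetric]) auto
  also have "\<dots> / of_nat (Suc n) = fps_nth f (Suc n)"
    by (simp add: fps_deriv_def del: of_nat_Suc)
  finally show ?case by (simp add: field_split_simps)
qed

lemma fps_nth_fps_expansion_real:
  fixes f :: "real \<Rightarrow> real"
  assumes "f has_fps_expansion F"
  shows   "fps_nth F n = (deriv ^^ n) f 0 / fact n"
proof -
  have "fps_nth F n = (deriv ^^ n) (eval_fps F) 0 / fact n"
    using assms by (intro fps_nth_conv_deriv_real) (auto simp: has_fps_expansion_def)
  also have "(deriv ^^ n) (eval_fps F) 0 = (deriv ^^ n) f 0"
    using assms by (intro higher_deriv_cong_ev) (auto simp: has_fps_expansion_def)
  finally show ?thesis .
qed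

lemma ecoef_EE: "ecoef k = fps_nth EE k"
proof -
  have "exp 1 * fps_nth EE k = (deriv ^^ k) efun 0 / fact k"
    using fps_nth_fps_expansion_real[OF efun_expansion, of k] by simp
  thus ?thesis unfolding ecoef_def by (simp add: field_simps)
qed

theorem mainTheorem1:
  fixes n :: nat
  assumes "n \<ge> 1"
  shows "fcoef (Suc n) < fcoef n"
proof -
  have "fcoef (Suc n) - fcoef n = dd (Suc n)"
    by (simp add: fcoef_def ecoef_EE dd_def DD_nth algebra_simps)
  moreover have "dd (Suc n) < 0" using dd_neg[of n] by auto
  ultimately show ?thesis by simp
qed

end
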